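(* If $H$ is a Vorob'ev regular hypergraph, then Graham's algorithm succeeds on $H$.
   Context: A hypergraph $H=(V,E)$ has a finite vertex set $V$ and a set $E$ of nonempty subsets of $V$ (hyperedges). Graham's algorithm: treating the hyperedges as a finite list, repeatedly apply the following operations until neither applies: (1) if a vertex $v$ belongs to exactly one hyperedge $X_i$, delete $v$ from $X_i$ (discarding $X_i$ if it becomes empty); (2) if two hyperedges with distinct indices satisfy $X_i\subseteq X_j$, delete $X_i$. Graham's algorithm succeeds on $H$ if the result has no hyperedges. Vorob'ev regularity: a complex is a hypergraph whose set of hyperedges is closed under taking subsets; the downward closure of $H$ is the complex whose hyperedges are all subsets of hyperedges of $H$. In a complex $\mathcal K$, a hyperedge is maximal if not a proper subset of another hyperedge. For distinct maximal hyperedges $X,Y$, $X$ yields a maximal intersection with $Y$ if there is no maximal hyperedge $Z\notin\{X,Y\}$ with $X\cap Y\subsetneq X\cap Z$. A maximal hyperedge $X$ is extreme if all maximal intersections of $X$ (i.e., the sets $X\cap Y$ over those $Y$ with which $X$ yields a maximal intersection) are equal. The proper vertices of an extreme $X$ are those belonging to no other maximal hyperedge; the normal subcomplex corresponding to $X$ consists of all hyperedges of $\mathcal K$ disjoint from the proper vertices of $X$. A normal series is a sequence $\mathcal K=\mathcal K_0\supset\mathcal K_1\supset\cdots\supset\mathcal K_r$ with each $\mathcal K_{\ell+1}$ a normal subcomplex of $\mathcal K_\ell$ ($0\le\ell<r$) and $\mathcal K_r$ having no extreme hyperedge. $\mathcal K$ is regular if it has a normal series whose last term is the complex without vertices. $H$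 is Vorob'ev regular if its downward closure is regular. *)

theory Defs
  imports Main
begin

definition hypergraph :: "'a set \<Rightarrow> 'a set set \<Rightarrow> bool" where
  "hypergraph V E \<longleftrightarrow> finite V \<and> (\<forall>X\<in>E. X \<noteq> {} \<and> X \<subseteq> V)"

definition del_at :: "nat \<Rightarrow> 'b list \<Rightarrow> 'b list" where
  "del_at i xs = take i xs @ drop (Suc i) xs"

inductive graham_step :: "'a set list \<Rightarrow> 'a set list \<Rightarrow> bool" where
  del_vertex:
    "\<lbrakk> i < length xs; v \<in> xs ! i; \<forall>j<length xs. v \<in> xs ! j \<longrightarrow> j = i;
       xs ! i - {v} \<noteq> {} \<rbrakk>
     \<Longrightarrow> graham_step xs (xs[i := xs ! i - {v}])"
| del_vertex_discard:
    "\<lbrakk> i < length xs; v \<in> xs ! i; \<forall>j<length xs. v \<in> xs ! j \<longrightarrow> j = i;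
       xs ! i - {v} = {} \<rbrakk>
     \<Longrightarrow> graham_step xs (del_at i xs)"
| del_edge:
    "\<lbrakk> i < length xs; j < length xs; i \<noteq> j; xs ! i \<subseteq> xs ! j \<rbrakk>
     \<Longrightarrow> graham_step xs (del_at i xs)"

definition graham_succeeds :: "'a set list \<Rightarrow> bool" where
  "graham_succeeds xs \<longleftrightarrow>
     (\<forall>ys. graham_step\<^sup>*\<^sup>* xs ys \<longrightarrow> (\<nexists>zs. graham_step ys zs) \<longrightarrow> ys = [])"

text \<open>A complex is represented by its set of hyperedges; its vertices are the
  vertices occurring in hyperedges.\<close>
definition down_closure :: "'a set set \<Rightarrow> 'a set set" where
  "down_closure E = {A. A \<noteq> {} \<and> (\<exists>X\<in>E. A \<subseteq> X)}"

definition maximal_edge :: "'a set set \<Rightarrow> 'a set \<Rightarrow> bool" where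
  "maximal_edge K X \<longleftrightarrow> X \<in> K \<and> \<not> (\<exists>Y\<in>K. X \<subset> Y)"

definition yields_max_int :: "'a set set \<Rightarrow> 'a set \<Rightarrow> 'a set \<Rightarrow> bool" where
  "yields_max_int K X Y \<longleftrightarrow> maximal_edge K X \<and> maximal_edge K Y \<and> X \<noteq> Y \<and>
     \<not> (\<exists>Z. maximal_edge K Z \<and> Z \<noteq> X \<and> Z \<noteq> Y \<and> X \<inter> Y \<subset> X \<inter> Z)"

definition extreme :: "'a set set \<Rightarrow> 'a set \<Rightarrow> bool" where
  "extreme K X \<longleftrightarrow> maximal_edge K X \<and>
     (\<forall>Y Y'. yields_max_int K X Y \<longrightarrow> yields_max_int K X Y' \<longrightarrow> X \<inter> Y = X \<inter> Y')"

definition proper_vertices :: "'a set set \<Rightarrow> 'a set \<Rightarrow> 'a set" where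
  "proper_vertices K X = {v \<in> X. \<forall>Y. maximal_edge K Y \<and> Y \<noteq> X \<longrightarrow> v \<notin> Y}"

definition normal_subcomplex :: "'a set set \<Rightarrow> 'a set \<Rightarrow> 'a set set" where
  "normal_subcomplex K X = {A \<in> K. A \<inter> proper_vertices K X = {}}"

definition normal_series :: "'a set set \<Rightarrow> 'a set set list \<Rightarrow> bool" where
  "normal_series K Ks \<longleftrightarrow> Ks \<noteq> [] \<and> hd Ks = K \<and>
     (\<forall>l. Suc l < length Ks \<longrightarrow> Ks ! Suc l \<subset> Ks ! l \<and>
        (\<exists>X. extreme (Ks ! l) X \<and> Ks ! Suc l = normal_subcomplex (Ks ! l) X)) \<and>
     \<not> (\<exists>X. extreme (last Ks) X)"

definition regular_complex :: "'a set set \<Rightarrow> bool" where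
  "regular_complex K \<longleftrightarrow> (\<exists>Ks. normal_series K Ks \<and> last Ks = {})"

definition vorobev_regular :: "'a set set \<Rightarrow> bool" where
  "vorobev_regular E \<longleftrightarrow> regular_complex (down_closure E)"

end

theory Submission
  imports Defs
begin

lemma set_del_at: "x \<in> set (del_at i xs) \<longleftrightarrow> (\<exists>k<length xs. k \<noteq> i \<and> x = xs!k)"
proof
  assume "x \<in> set (del_at i xs)"
  then have "x \<in> set (take i xs) \<or> x \<in> set (drop (Suc i) xs)" by (simp add: del_at_def)
  then show "\<exists>k<length xs. k \<noteq> i \<and> x = xs!k"
  proof
    assume "x \<in> set (take i xs)"
    then obtain k where "k < length (take i xs)" "x = take i xs ! k" by (metis in_set_conv_nth)
    then show ?thesis by (intro exI[of _ k]) auto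
  next
    assume "x \<in> set (drop (Suc i) xs)"
    then obtain k where "k < length (drop (Suc i) xs)" "x = drop (Suc i) xs ! k" by (metis in_set_conv_nth)
    then show ?thesis by (intro exI[of _ "Suc i + k"]) auto
  qed
next
  assume "\<exists>k<length xs. k \<noteq> i \<and> x = xs!k"
  then obtain k where k: "k < length xs" "k \<noteq> i" "x = xs!k" by blast
  show "x \<in> set (del_at i xs)"
  proof (cases "k < i")
    case True
    then have "x \<in> set (take i xs)" using k by (metis in_set_conv_nth length_take min_less_iff_conj nth_take)
    then show ?thesis by (simp add: del_at_def)
  next
    case False
    then have "k - Suc i < length (drop (Suc i) xs)" "drop (Suc i) xs ! (k - Suc i) = x" using k by auto
    then have "x \<in> set (drop (Suc i) xs)" by (metis nth_mem)
    then show ?thesis by (simp add: del_at_def)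
  qed
qed

lemma set_upd: "i < length xs \<Longrightarrow> x \<in> set (xs[i:=a]) \<longleftrightarrow> (x = a \<or> (\<exists>k<length xs. k\<noteq>i \<and> x = xs!k))"
  by (auto simp: in_set_conv_nth nth_list_update)

definition inv :: "'a set set \<Rightarrow> 'a set list \<Rightarrow> bool" where
  "inv E ys \<longleftrightarrow> (\<forall>f\<in>set ys. f \<noteq> {} \<and> (\<exists>Z\<in>E. f \<subseteq> Z)) \<and>
     (\<forall>Z\<in>E. Z \<inter> \<Union>(set ys) \<noteq> {} \<longrightarrow> (\<exists>g\<in>set ys. Z \<inter> \<Union>(set ys) \<subseteq> g))"

lemma inv_step: assumes "graham_step ys zs" "inv E ys" shows "inv E zs"
  using assms
proof induction
  case (del_vertex i xs v)
  let ?ys = "xs[i := xs ! i - {v}]"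
  let ?W = "\<Union>(set xs)" and ?W' = "\<Union>(set ?ys)"
  have memD: "x = xs!i - {v} \<or> (\<exists>k<length xs. k\<noteq>i \<and> x = xs!k)" if "x \<in> set ?ys" for x
    using set_upd[OF del_vertex(1)] that by metis
  have memI1: "xs!i - {v} \<in> set ?ys" using set_upd[OF del_vertex(1)] by metis
  have memI2: "xs!k \<in> set ?ys" if "k < length xs" "k \<noteq> i" for k
    using set_upd[OF del_vertex(1)] that by metis
  have W': "?W' \<subseteq> ?W - {v}"
  proof
    fix w assume "w \<in> ?W'"
    then obtain x where x: "x \<in> set ?ys" "w \<in> x" by blast
    from memD[OF x(1)] show "w \<in> ?W - {v}"
    proof
      assume "x = xs!i - {v}"
      then show ?thesis using x(2) nth_mem[OF del_vertex(1)] by blast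
    next
      assume "\<exists>k<length xs. k\<noteq>i \<and> x = xs!k"
      then obtain k where k: "k<length xs" "k\<noteq>i" "x = xs!k" by blast
      then have "v \<notin> x" using del_vertex(3) by blast
      then show ?thesis using x(2) k nth_mem[OF k(1)] by blast
    qed
  qed
  show ?case unfolding inv_def
  proof (rule conjI; intro ballI impI)
    fix f assume "f \<in> set ?ys"
    from memD[OF this] show "f \<noteq> {} \<and> (\<exists>Z\<in>E. f \<subseteq> Z)"
    proof (elim disjE)
      assume f: "f = xs!i - {v}"
      obtain Z where "Z\<in>E" "xs!i \<subseteq> Z" using del_vertex(5) nth_mem[OF del_vertex(1)] unfolding inv_def by blast
      then show ?thesis using f del_vertex(4) by blast
    next
      assume "\<exists>k<length xs. k\<noteq>i \<and> f = xs!k"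
      then have "f \<in> set xs" by auto
      then show ?thesis using del_vertex(5) unfolding inv_def by blast
    qed
  next
    fix Z assume Z: "Z \<in> E" "Z \<inter> ?W' \<noteq> {}"
    then have "Z \<inter> ?W \<noteq> {}" using W' by blast
    then obtain g where g: "g \<in> set xs" "Z \<inter> ?W \<subseteq> g" using del_vertex(5) Z unfolding inv_def by blast
    then obtain k where k: "k < length xs" "g = xs!k" by (metis in_set_conv_nth)
    show "\<exists>g\<in>set ?ys. Z \<inter> ?W' \<subseteq> g"
    proof (cases "k = i")
      case True
      have "Z \<inter> ?W' \<subseteq> xs!i - {v}" using g k W' True by blast
      then show ?thesis using memI1 by blast
    next
      case False
      have "Z \<inter> ?W' \<subseteq> xs!k" using g k W' by blast
      then show ?thesis using memI2[OF k(1) False] by blast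
    qed
  qed
next
  case (del_vertex_discard i xs v)
  let ?ys = "del_at i xs"
  let ?W = "\<Union>(set xs)" and ?W' = "\<Union>(set ?ys)"
  have memD: "\<exists>k<length xs. k\<noteq>i \<and> x = xs!k" if "x \<in> set ?ys" for x
    using set_del_at that by metis
  have memI2: "xs!k \<in> set ?ys" if "k < length xs" "k \<noteq> i" for k
    using set_del_at that by metis
  have W': "?W' \<subseteq> ?W - {v}"
  proof
    fix w assume "w \<in> ?W'"
    then obtain x where x: "x \<in> set ?ys" "w \<in> x" by blast
    obtain k where k: "k<length xs" "k\<noteq>i" "x = xs!k" using memD[OF x(1)] by blast
    then have "v \<notin> x" using del_vertex_discard(3) by blast
    then show "w \<in> ?W - {v}" using x(2) k nth_mem[OF k(1)] by blast
  qed
  show ?case unfolding inv_def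
  proof (rule conjI; intro ballI impI)
    fix f assume "f \<in> set ?ys"
    then obtain k where "k<length xs" "f = xs!k" using memD by blast
    then have "f \<in> set xs" by auto
    then show "f \<noteq> {} \<and> (\<exists>Z\<in>E. f \<subseteq> Z)" using del_vertex_discard(5) unfolding inv_def by blast
  next
    fix Z assume Z: "Z \<in> E" "Z \<inter> ?W' \<noteq> {}"
    then have "Z \<inter> ?W \<noteq> {}" using W' by blast
    then obtain g where g: "g \<in> set xs" "Z \<inter> ?W \<subseteq> g" using del_vertex_discard(5) Z unfolding inv_def by blast
    then obtain k where k: "k < length xs" "g = xs!k" by (metis in_set_conv_nth)
    have "k \<noteq> i"
    proof
      assume "k = i"
      then have "Z \<inter> ?W' \<subseteq> xs!i - {v}" using g k W' by blast
      then show False using Z del_vertex_discard(4) by blast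
    qed
    have "Z \<inter> ?W' \<subseteq> xs!k" using g k W' by blast
    then show "\<exists>g\<in>set ?ys. Z \<inter> ?W' \<subseteq> g" using memI2[OF k(1) \<open>k \<noteq> i\<close>] by blast
  qed
next
  case (del_edge i xs j)
  let ?ys = "del_at i xs"
  let ?W = "\<Union>(set xs)" and ?W' = "\<Union>(set ?ys)"
  have memD: "\<exists>k<length xs. k\<noteq>i \<and> x = xs!k" if "x \<in> set ?ys" for x
    using set_del_at that by metis
  have memI2: "xs!k \<in> set ?ys" if "k < length xs" "k \<noteq> i" for k
    using set_del_at that by metis
  have W': "?W' = ?W"
  proof
    show "?W' \<subseteq> ?W"
    proof
      fix w assume "w \<in> ?W'"
      then obtain x where x: "x \<in> set ?ys" "w \<in> x" by blast
      obtain k where k: "k<length xs" "x = xs!k" using memD[OF x(1)] by blast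
      then show "w \<in> ?W" using x(2) nth_mem[OF k(1)] by blast
    qed
    show "?W \<subseteq> ?W'"
    proof
      fix w assume "w \<in> ?W"
      then obtain k where k: "k < length xs" "w \<in> xs!k" by (metis UnionE in_set_conv_nth)
      show "w \<in> ?W'"
      proof (cases "k = i")
        case True
        then have "w \<in> xs!j" using k del_edge(4) by blast
        then show ?thesis using memI2[OF del_edge(2)] del_edge(3) by blast
      next
        case False then show ?thesis using k memI2[OF k(1) False] by blast
      qed
    qed
  qed
  show ?case unfolding inv_def
  proof (rule conjI; intro ballI impI)
    fix f assume "f \<in> set ?ys"
    then obtain k where "k<length xs" "f = xs!k" using memD by blast
    then have "f \<in> set xs" by auto
    then show "f \<noteq> {} \<and> (\<exists>Z\<in>E. f \<subseteq> Z)" using del_edge(5) unfolding inv_def by blast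
  next
    fix Z assume Z: "Z \<in> E" "Z \<inter> ?W' \<noteq> {}"
    then have "Z \<inter> ?W \<noteq> {}" using W' by simp
    then obtain g where g: "g \<in> set xs" "Z \<inter> ?W \<subseteq> g" using del_edge(5) Z unfolding inv_def by blast
    then obtain k where k: "k < length xs" "g = xs!k" by (metis in_set_conv_nth)
    show "\<exists>g\<in>set ?ys. Z \<inter> ?W' \<subseteq> g"
    proof (cases "k = i")
      case True
      have "Z \<inter> ?W' \<subseteq> xs!j" using g k W' True del_edge(4) by simp
      then show ?thesis using memI2[OF del_edge(2)] del_edge(3) by blast
    next
      case False
      have "Z \<inter> ?W' \<subseteq> xs!k" using g k W' by simp
      then show ?thesis using memI2[OF k(1) False] by blast
    qed
  qed
qed

lemma inv_steps: "graham_step\<^sup>*\<^sup>* ys zs \<Longrightarrow> inv E ys \<Longrightarrow> inv E zs"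
  by (induction rule: rtranclp_induct) (auto intro: inv_step)

lemma stuck1: assumes "\<nexists>zs. graham_step ys zs" "i < length ys" "j < length ys" "i \<noteq> j"
  shows "\<not> ys!i \<subseteq> ys!j"
proof
  assume "ys!i \<subseteq> ys!j"
  then have "graham_step ys (del_at i ys)" using graham_step.del_edge[OF assms(2-4)] by blast
  then show False using assms(1) by blast
qed

lemma stuck2: assumes "\<nexists>zs. graham_step ys zs" "i < length ys" "v \<in> ys!i"
  shows "\<exists>j<length ys. j \<noteq> i \<and> v \<in> ys!j"
proof (rule ccontr)
  assume "\<not> ?thesis"
  then have "\<forall>j<length ys. v \<in> ys ! j \<longrightarrow> j = i" by blast
  then show False
  proof (cases "ys ! i - {v} = {}")
    case True
    have "graham_step ys (del_at i ys)"
      by (rule graham_step.del_vertex_discard[OF assms(2,3) \<open>\<forall>j<length ys. v \<in> ys ! j \<longrightarrow> j = i\<close> True])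
    then show False using assms(1) by blast
  next
    case False
    have "graham_step ys (ys[i := ys ! i - {v}])"
      by (rule graham_step.del_vertex[OF assms(2,3) \<open>\<forall>j<length ys. v \<in> ys ! j \<longrightarrow> j = i\<close> False])
    then show False using assms(1) by blast
  qed
qed

lemma max_ext: assumes "finite K" "f \<in> K" shows "\<exists>M. maximal_edge K M \<and> f \<subseteq> M"
proof -
  obtain M where M: "M \<in> K" "f \<le> M" "\<forall>b\<in>K. M \<le> b \<longrightarrow> M = b"
    using finite_has_maximal2[OF assms] by blast
  have "maximal_edge K M" unfolding maximal_edge_def
  proof (intro conjI)
    show "M \<in> K" by (rule M(1))
    show "\<not> (\<exists>Y\<in>K. M \<subset> Y)" using M(3) by blast
  qed
  then show ?thesis using M(2) by blast
qed

theorem lemma17: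
  fixes V :: "'a set" and E :: "'a set set" and xs :: "'a set list"
  assumes "hypergraph V E"
    and "vorobev_regular E"
    and "distinct xs" and "set xs = E"
  shows "graham_succeeds xs"
  unfolding graham_succeeds_def
proof (intro allI impI)
  fix ys assume steps: "graham_step\<^sup>*\<^sup>* xs ys" and stuck: "\<nexists>zs. graham_step ys zs"
  have "inv E xs" using assms(1,4) unfolding inv_def hypergraph_def by auto
  then have I: "inv E ys" using inv_steps steps by blast
  show "ys = []"
  proof (rule ccontr)
    assume ne: "ys \<noteq> []"
    obtain Ks where Ks: "normal_series (down_closure E) Ks" "last Ks = {}"
      using assms(2) unfolding vorobev_regular_def regular_complex_def by blast
    let ?D = "down_closure E"
    have finD: "finite ?D"
    proof (rule finite_subset)
      show "?D \<subseteq> Pow V" using assms(1) unfolding down_closure_def hypergraph_def by auto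
      show "finite (Pow V)" using assms(1) unfolding hypergraph_def by auto
    qed
    let ?W = "\<Union>(set ys)"
    have key: "set ys \<subseteq> Ks!l \<and> Ks!l \<subseteq> ?D" if "l < length Ks" for l
      using that
    proof (induction l)
      case 0
      have "Ks!0 = ?D" using Ks(1) unfolding normal_series_def by (metis hd_conv_nth)
      moreover have "set ys \<subseteq> ?D" using I unfolding inv_def down_closure_def by auto
      ultimately show ?case by simp
    next
      case (Suc l)
      let ?K = "Ks!l"
      have IH: "set ys \<subseteq> ?K" "?K \<subseteq> ?D" using Suc by auto
      obtain X where X: "extreme ?K X" "Ks ! Suc l = normal_subcomplex ?K X" "Ks ! Suc l \<subset> ?K"
        using Ks(1) Suc.prems unfolding normal_series_def by blast
      have finK: "finite ?K" using IH finD finite_subset by blast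
      have "X \<in> ?K" using X(1) unfolding extreme_def maximal_edge_def by blast
      then obtain Z where Z: "Z \<in> E" "X \<subseteq> Z" using IH unfolding down_closure_def by blast
      have "f \<in> Ks ! Suc l" if f: "f \<in> set ys" for f
      proof -
        have "f \<inter> proper_vertices ?K X = {}"
        proof (rule ccontr)
          assume "f \<inter> proper_vertices ?K X \<noteq> {}"
          then obtain w where w: "w \<in> f" "w \<in> proper_vertices ?K X" by blast
          obtain i where i: "i < length ys" "f = ys!i" using f by (metis in_set_conv_nth)
          obtain j where j: "j < length ys" "j \<noteq> i" "w \<in> ys!j" using stuck2[OF stuck i(1)] w i by blast
          have P: "\<And>Y. maximal_edge ?K Y \<Longrightarrow> w \<in> Y \<Longrightarrow> Y = X"
            using w(2) unfolding proper_vertices_def by blast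
          obtain M where M: "maximal_edge ?K M" "ys!i \<subseteq> M" using max_ext[OF finK] IH i f by blast
          obtain M' where M': "maximal_edge ?K M'" "ys!j \<subseteq> M'"
            using max_ext[OF finK] IH j nth_mem by blast
          have "M = X" using P M w i by blast
          have "M' = X" using P M' j by blast
          have sub: "ys!i \<union> ys!j \<subseteq> Z \<inter> ?W" using M M' \<open>M = X\<close> \<open>M' = X\<close> Z i j
            by (auto intro: nth_mem)
          then have "Z \<inter> ?W \<noteq> {}" using j by blast
          then obtain g where g: "g \<in> set ys" "Z \<inter> ?W \<subseteq> g" using I Z unfolding inv_def by blast
          then obtain k where k: "k < length ys" "g = ys!k" by (metis in_set_conv_nth)
          show False
          proof (cases "k = i")
            case True
            then show False using stuck1[OF stuck j(1) i(1) j(2)] sub g k by blast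
          next
            case False
            then show False using stuck1[OF stuck i(1) k(1)] sub g k by blast
          qed
        qed
        then show ?thesis using X(2) IH f unfolding normal_subcomplex_def by blast
      qed
      then show ?case using X(3) IH by blast
    qed
    have "length Ks > 0" using Ks(1) unfolding normal_series_def by simp
    then have "set ys \<subseteq> last Ks" using key[of "length Ks - 1"] by (simp add: last_conv_nth Ks(1)[unfolded normal_series_def])
    then show False using Ks(2) ne by simp
  qed
qed

end
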